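(* $\mathbb E\big[\|\boldsymbol\Sigma-\mathbf T\|^2\big]\le\dfrac{34\kappa^4}{n}+\dfrac{15\kappa^4}{n^2}$.
   Context: $\mathbf x_1,\dots,\mathbf x_n$ are iid from a probability distribution $\rho_{\mathcal X}$ on $\mathcal X\subseteq\mathbb R^d$. $K$ is a symmetric positive-definite kernel on $\mathcal X$ with $\sup_{\mathbf x}K(\mathbf x,\mathbf x)\le\kappa^2$ and $K(\mathbf x,\tilde{\mathbf x})=\sum_jt_j^2\psi_j(\mathbf x)\psi_j(\tilde{\mathbf x})$ (absolutely convergent), where $\{\psi_j\}$ is an orthonormal basis of $L^2(\rho_{\mathcal X})$ and $t_1^2\ge t_2^2\ge\dots\ge0$. Let $\phi_j=t_j\psi_j$. On $\ell^2(\mathbb N)$: $\mathbf T=\mathrm{diag}(t_1^2,t_2^2,\dots)$, $\boldsymbol\phi_i=(\phi_1(\mathbf x_i),\phi_2(\mathbf x_i),\dots)^\top$, $\boldsymbol\Sigma=\frac1n\sum_{i=1}^n\boldsymbol\phi_i\boldsymbol\phi_i^\top$; $\|\cdot\|$ is the operator norm on $\ell^2(\mathbb N)$. *)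

theory Defs
  imports "HOL-Probability.Probability"
begin

text \<open>Vectors of \<open>\<ell>\<^sup>2(\<nat>)\<close> are represented as square-summable functions
  \<open>nat \<Rightarrow> real\<close>; bounded operators on \<open>\<ell>\<^sup>2(\<nat>)\<close> by their infinite matrices
  \<open>nat \<Rightarrow> nat \<Rightarrow> real\<close>.\<close>

definition is_l2 :: "(nat \<Rightarrow> real) \<Rightarrow> bool" where
  "is_l2 v \<longleftrightarrow> summable (\<lambda>j. (v j)\<^sup>2)"

definition l2_norm :: "(nat \<Rightarrow> real) \<Rightarrow> real" where
  "l2_norm v = sqrt (\<Sum>j. (v j)\<^sup>2)"

definition mat_apply :: "(nat \<Rightarrow> nat \<Rightarrow> real) \<Rightarrow> (nat \<Rightarrow> real) \<Rightarrow> (nat \<Rightarrow> real)" where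
  "mat_apply A v = (\<lambda>j. \<Sum>k. A j k * v k)"

definition op_norm :: "(nat \<Rightarrow> nat \<Rightarrow> real) \<Rightarrow> real" where
  "op_norm A = (SUP v\<in>{v. is_l2 v \<and> l2_norm v \<le> 1}. l2_norm (mat_apply A v))"

definition sym_pd_kernel :: "'a set \<Rightarrow> ('a \<Rightarrow> 'a \<Rightarrow> real) \<Rightarrow> bool" where
  "sym_pd_kernel X K \<longleftrightarrow>
     (\<forall>x\<in>X. \<forall>y\<in>X. K x y = K y x) \<and>
     (\<forall>m (z :: nat \<Rightarrow> 'a) (c :: nat \<Rightarrow> real). (\<forall>i<m. z i \<in> X) \<longrightarrow>
        (\<Sum>i<m. \<Sum>j<m. c i * c j * K (z i) (z j)) \<ge> 0)"

definition L2_onb :: "'a measure \<Rightarrow> (nat \<Rightarrow> 'a \<Rightarrow> real) \<Rightarrow> bool" where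
  "L2_onb \<rho> \<psi> \<longleftrightarrow>
     (\<forall>j. \<psi> j \<in> borel_measurable \<rho> \<and> integrable \<rho> (\<lambda>x. (\<psi> j x)\<^sup>2)) \<and>
     (\<forall>j k. (\<integral>x. \<psi> j x * \<psi> k x \<partial>\<rho>) = (if j = k then 1 else 0)) \<and>
     (\<forall>f \<in> borel_measurable \<rho>. integrable \<rho> (\<lambda>x. (f x)\<^sup>2) \<longrightarrow>
        (\<forall>j. (\<integral>x. f x * \<psi> j x \<partial>\<rho>) = 0) \<longrightarrow> (AE x in \<rho>. f x = 0))"

definition Sigma_op :: "nat \<Rightarrow> (nat \<Rightarrow> real) \<Rightarrow> (nat \<Rightarrow> 'a \<Rightarrow> real) \<Rightarrow> (nat \<Rightarrow> 'a) \<Rightarrow> nat \<Rightarrow> nat \<Rightarrow> real" where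
  "Sigma_op n t \<psi> xs = (\<lambda>j k. (1 / real n) * (\<Sum>i<n. (t j * \<psi> j (xs i)) * (t k * \<psi> k (xs i))))"

definition T_op :: "(nat \<Rightarrow> real) \<Rightarrow> nat \<Rightarrow> nat \<Rightarrow> real" where
  "T_op t = (\<lambda>j k. if j = k then (t j)\<^sup>2 else 0)"

end

theory Submission
  imports Defs "HOL-Probability.Probability"
begin

lemma cs_inf:
  fixes a v :: "nat \<Rightarrow> real"
  assumes sa: "summable (\<lambda>k. (a k)\<^sup>2)" and sv: "summable (\<lambda>k. (v k)\<^sup>2)"
  shows "summable (\<lambda>k. a k * v k) \<and> (\<Sum>k. a k * v k)\<^sup>2 \<le> (\<Sum>k. (a k)\<^sup>2) * (\<Sum>k. (v k)\<^sup>2)"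
proof -
  have b: "norm (a k * v k) \<le> (a k)\<^sup>2 + (v k)\<^sup>2" for k
  proof -
    have "0 \<le> (\<bar>a k\<bar> - \<bar>v k\<bar>)\<^sup>2" by simp
    then have "2 * (\<bar>a k\<bar> * \<bar>v k\<bar>) \<le> (a k)\<^sup>2 + (v k)\<^sup>2" by (simp add: power2_diff)
    moreover have "0 \<le> \<bar>a k\<bar> * \<bar>v k\<bar>" by simp
    ultimately show ?thesis unfolding real_norm_def abs_mult by linarith
  qed
  have s: "summable (\<lambda>k. a k * v k)"
    by (rule summable_comparison_test[OF _ summable_add[OF sa sv]]) (use b in auto)
  have part: "(\<Sum>k<N. a k * v k)\<^sup>2 \<le> (\<Sum>k. (a k)\<^sup>2) * (\<Sum>k. (v k)\<^sup>2)" for N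
  proof -
    have "\<bar>\<Sum>k<N. a k * v k\<bar> \<le> (\<Sum>k<N. \<bar>a k\<bar> * \<bar>v k\<bar>)"
      using sum_abs[of "\<lambda>k. a k * v k" "{..<N}"] by (simp only: abs_mult)
    also have "\<dots> \<le> L2_set a {..<N} * L2_set v {..<N}" by (rule L2_set_mult_ineq)
    finally have h: "\<bar>\<Sum>k<N. a k * v k\<bar> \<le> L2_set a {..<N} * L2_set v {..<N}" .
    have "(\<Sum>k<N. a k * v k)\<^sup>2 \<le> (L2_set a {..<N} * L2_set v {..<N})\<^sup>2"
      using power_mono[OF h abs_ge_zero, of 2] by (simp only: power2_abs)
    also have "\<dots> = (\<Sum>k<N. (a k)\<^sup>2) * (\<Sum>k<N. (v k)\<^sup>2)"
      by (simp add: L2_set_def power_mult_distrib sum_nonneg)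
    also have "\<dots> \<le> (\<Sum>k. (a k)\<^sup>2) * (\<Sum>k. (v k)\<^sup>2)"
    proof (rule mult_mono)
      show "(\<Sum>k<N. (a k)\<^sup>2) \<le> (\<Sum>k. (a k)\<^sup>2)" by (rule sum_le_suminf[OF sa]) auto
      show "(\<Sum>k<N. (v k)\<^sup>2) \<le> (\<Sum>k. (v k)\<^sup>2)" by (rule sum_le_suminf[OF sv]) auto
      show "0 \<le> (\<Sum>k. (a k)\<^sup>2)" by (rule suminf_nonneg[OF sa]) simp
      show "0 \<le> (\<Sum>k<N. (v k)\<^sup>2)" by (rule sum_nonneg) simp
    qed
    finally show ?thesis .
  qed
  have "(\<lambda>N. (\<Sum>k<N. a k * v k)\<^sup>2) \<longlonglongrightarrow> (\<Sum>k. a k * v k)\<^sup>2"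
    by (intro tendsto_intros summable_LIMSEQ s)
  then have "(\<Sum>k. a k * v k)\<^sup>2 \<le> (\<Sum>k. (a k)\<^sup>2) * (\<Sum>k. (v k)\<^sup>2)"
    by (rule LIMSEQ_le_const2) (use part in auto)
  with s show ?thesis by blast
qed

lemma op_norm_HS:
  assumes rows: "\<And>j. summable (\<lambda>k. (A j k)\<^sup>2)"
    and tot: "summable (\<lambda>j. \<Sum>k. (A j k)\<^sup>2)"
  shows "(op_norm A)\<^sup>2 \<le> (\<Sum>j. \<Sum>k. (A j k)\<^sup>2)"
proof -
  define H where "H = (\<Sum>j. \<Sum>k. (A j k)\<^sup>2)"
  have R0: "0 \<le> (\<Sum>k. (A j k)\<^sup>2)" for j by (rule suminf_nonneg[OF rows]) (rule zero_le_power2)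
  have H0: "0 \<le> H" unfolding H_def by (rule suminf_nonneg[OF tot R0])
  let ?S = "{v. is_l2 v \<and> l2_norm v \<le> 1}"
  have bound: "l2_norm (mat_apply A v) \<le> sqrt H" if "v \<in> ?S" for v
  proof -
    from that have sv: "summable (\<lambda>k. (v k)\<^sup>2)" and n1: "sqrt (\<Sum>k. (v k)\<^sup>2) \<le> 1"
      unfolding is_l2_def l2_norm_def by blast+
    have v1: "(\<Sum>k. (v k)\<^sup>2) \<le> 1" using n1 by (simp only: real_sqrt_le_1_iff)
    have row: "(mat_apply A v j)\<^sup>2 \<le> (\<Sum>k. (A j k)\<^sup>2)" for j
    proof -
      have e: "mat_apply A v j = (\<Sum>k. A j k * v k)" by (simp only: mat_apply_def)
      have "(mat_apply A v j)\<^sup>2 \<le> (\<Sum>k. (A j k)\<^sup>2) * (\<Sum>k. (v k)\<^sup>2)"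
        unfolding e using cs_inf[OF rows[of j] sv] by (rule conjunct2)
      also have "\<dots> \<le> (\<Sum>k. (A j k)\<^sup>2) * 1"
        by (rule mult_left_mono[OF v1 R0])
      finally show ?thesis by simp
    qed
    have sm: "summable (\<lambda>j. (mat_apply A v j)\<^sup>2)"
    proof (rule summable_comparison_test[OF _ tot])
      show "\<exists>N. \<forall>j\<ge>N. norm ((mat_apply A v j)\<^sup>2) \<le> (\<Sum>k. (A j k)\<^sup>2)"
        using row by simp
    qed
    have "(\<Sum>j. (mat_apply A v j)\<^sup>2) \<le> H"
      unfolding H_def by (rule suminf_le[OF row sm tot])
    then show ?thesis unfolding l2_norm_def by (rule real_sqrt_le_mono)
  qed
  have z: "(\<lambda>_. 0) \<in> ?S" by (simp add: is_l2_def l2_norm_def)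
  have le: "op_norm A \<le> sqrt H" unfolding op_norm_def
    by (rule cSUP_least) (use z bound in blast)+
  have bdd: "bdd_above ((\<lambda>v. l2_norm (mat_apply A v)) ` ?S)"
    by (rule bdd_aboveI2[where M="sqrt H"]) (rule bound)
  have "l2_norm (mat_apply A (\<lambda>_. 0)) \<le> op_norm A" unfolding op_norm_def
    by (rule cSUP_upper[OF z bdd])
  moreover have "0 \<le> l2_norm (mat_apply A (\<lambda>_. 0))" unfolding l2_norm_def by (rule real_sqrt_ge_zero) (simp add: mat_apply_def)
  ultimately have "0 \<le> op_norm A" by linarith
  then have "(op_norm A)\<^sup>2 \<le> (sqrt H)\<^sup>2" using le by (rule power_mono[rotated])
  also have "(sqrt H)\<^sup>2 = H" using H0 by (rule real_sqrt_pow2)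
  finally show ?thesis unfolding H_def .
qed

lemma op_norm_HS_ennreal:
  assumes fin: "(\<Sum>j. \<Sum>k. ennreal ((A j k)\<^sup>2)) \<noteq> \<top>"
  shows "ennreal ((op_norm A)\<^sup>2) \<le> (\<Sum>j. \<Sum>k. ennreal ((A j k)\<^sup>2))"
proof -
  have fin': "(\<Sum>j. \<Sum>k. ennreal ((A j k)\<^sup>2)) < \<top>" using fin by (simp only: top.not_eq_extremum)
  have rfin: "(\<Sum>k. ennreal ((A j k)\<^sup>2)) \<noteq> \<top>" for j
    using ennreal_suminf_lessD[OF fin', of j] by (simp only: top.not_eq_extremum)
  have rows: "summable (\<lambda>k. (A j k)\<^sup>2)" for j
    by (rule summable_suminf_not_top[OF zero_le_power2 rfin])
  have req: "(\<Sum>k. ennreal ((A j k)\<^sup>2)) = ennreal (\<Sum>k. (A j k)\<^sup>2)" for j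
    by (rule suminf_ennreal2[OF zero_le_power2 rows])
  have R0: "0 \<le> (\<Sum>k. (A j k)\<^sup>2)" for j by (rule suminf_nonneg[OF rows]) (rule zero_le_power2)
  have fin2: "(\<Sum>j. ennreal (\<Sum>k. (A j k)\<^sup>2)) \<noteq> \<top>" using fin unfolding req .
  have tot: "summable (\<lambda>j. \<Sum>k. (A j k)\<^sup>2)"
    by (rule summable_suminf_not_top[OF R0 fin2])
  have eq: "(\<Sum>j. \<Sum>k. ennreal ((A j k)\<^sup>2)) = ennreal (\<Sum>j. \<Sum>k. (A j k)\<^sup>2)"
    unfolding req by (rule suminf_ennreal2[OF R0 tot])
  show ?thesis unfolding eq by (rule ennreal_leI[OF op_norm_HS[OF rows tot]])
qed

lemma var_mean:
  fixes \<rho> :: "'a measure" and g :: "'a \<Rightarrow> real"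
  assumes P: "prob_space \<rho>" and gm: "g \<in> borel_measurable \<rho>"
    and gb: "\<And>x. x \<in> space \<rho> \<Longrightarrow> \<bar>g x\<bar> \<le> B"
    and g0: "integral\<^sup>L \<rho> g = 0" and n: "n > 0"
  shows "integrable (PiM {..<n} (\<lambda>_. \<rho>)) (\<lambda>xs. ((1 / real n) * (\<Sum>i<n. g (xs i)))\<^sup>2)
    \<and> integral\<^sup>L (PiM {..<n} (\<lambda>_. \<rho>)) (\<lambda>xs. ((1 / real n) * (\<Sum>i<n. g (xs i)))\<^sup>2)
       = (1 / real n) * integral\<^sup>L \<rho> (\<lambda>x. (g x)\<^sup>2)"
proof -
  interpret prob_space \<rho> by fact
  interpret PS: product_sigma_finite "\<lambda>_. \<rho>" by unfold_locales
  let ?M = "PiM {..<n} (\<lambda>_. \<rho>)"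
  interpret MP: prob_space ?M by (rule prob_space_PiM) (rule P)
  have gb2: "\<bar>g y * g z\<bar> \<le> B * B" if "y \<in> space \<rho>" "z \<in> space \<rho>" for y z
  proof -
    have 1: "\<bar>g y\<bar> \<le> B" by (rule gb[OF that(1)])
    have 2: "\<bar>g z\<bar> \<le> B" by (rule gb[OF that(2)])
    have B0: "0 \<le> B" using 1 abs_ge_zero[of "g y"] by linarith
    have "\<bar>g y\<bar> * \<bar>g z\<bar> \<le> B * B" by (rule mult_mono[OF 1 2 B0 abs_ge_zero])
    then show ?thesis by (simp only: abs_mult)
  qed
  have gint: "integrable \<rho> g"
  proof (rule integrable_const_bound[where B=B])
    show "AE x in \<rho>. norm (g x) \<le> B" by (rule AE_I2) (simp only: real_norm_def gb)
  qed (rule gm)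
  have g2int: "integrable \<rho> (\<lambda>x. g x * g x)"
  proof (rule integrable_const_bound[where B="B*B"])
    show "AE x in \<rho>. norm (g x * g x) \<le> B * B" by (rule AE_I2) (simp only: real_norm_def gb2)
  qed (rule borel_measurable_times[OF gm gm])
  have comp: "(\<lambda>xs. g (xs i)) \<in> borel_measurable ?M" if "i < n" for i
    by (rule measurable_compose[OF measurable_component_singleton[of i "{..<n}" "\<lambda>_. \<rho>"] gm]) (simp add: that)
  have sp: "xs i \<in> space \<rho>" if "xs \<in> space ?M" "i < n" for xs i
    by (rule measurable_space[OF measurable_component_singleton[of i "{..<n}" "\<lambda>_. \<rho>"] that(1)]) (simp add: that)
  have tint: "integrable ?M (\<lambda>xs. g (xs i) * g (xs l))" if "i < n" "l < n" for i l
  proof (rule MP.integrable_const_bound[where B="B*B"])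
    show "AE x in ?M. norm (g (x i) * g (x l)) \<le> B * B"
    proof (rule AE_I2)
      fix x assume x: "x \<in> space ?M"
      show "norm (g (x i) * g (x l)) \<le> B * B"
        unfolding real_norm_def by (rule gb2[OF sp[OF x that(1)] sp[OF x that(2)]])
    qed
    show "(\<lambda>x. g (x i) * g (x l)) \<in> borel_measurable ?M"
      by (rule borel_measurable_times[OF comp comp]) (simp_all add: that)
  qed
  have tval: "integral\<^sup>L ?M (\<lambda>xs. g (xs i) * g (xs l)) = (if i = l then integral\<^sup>L \<rho> (\<lambda>x. g x * g x) else 0)"
    if "i < n" "l < n" for i l
  proof (cases "i = l")
    case True
    define F where "F m = (\<lambda>x. if m = i then g x * g x else (1::real))" for m
    have pr: "(\<Prod>m\<in>{..<n}. F m (xs m)) = g (xs i) * g (xs l)" for xs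
    proof -
      have "(\<Prod>m\<in>{..<n}. F m (xs m)) = (\<Prod>m\<in>{..<n}. if m = i then g (xs m) * g (xs m) else 1)"
        by (simp only: F_def)
      also have "\<dots> = (if i \<in> {..<n} then g (xs i) * g (xs i) else 1)"
        by (rule prod.delta) simp
      also have "\<dots> = g (xs i) * g (xs l)" using that True by simp
      finally show ?thesis .
    qed
    have Fi: "integrable \<rho> (F m)" for m
    proof (cases "m = i")
      case True then show ?thesis unfolding F_def using g2int by simp
    next
      case False then show ?thesis unfolding F_def by simp
    qed
    have Fv: "integral\<^sup>L \<rho> (F m) = (if m = i then integral\<^sup>L \<rho> (\<lambda>x. g x * g x) else 1)" for m
    proof (cases "m = i")
      case True then show ?thesis unfolding F_def by simp
    next
      case False then show ?thesis unfolding F_def by (simp add: prob_space)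
    qed
    have "integral\<^sup>L ?M (\<lambda>xs. g (xs i) * g (xs l)) = integral\<^sup>L ?M (\<lambda>xs. \<Prod>m\<in>{..<n}. F m (xs m))"
      by (simp only: pr)
    also have "\<dots> = (\<Prod>m\<in>{..<n}. integral\<^sup>L \<rho> (F m))"
      by (rule PS.product_integral_prod) (simp_all add: Fi)
    also have "\<dots> = (\<Prod>m\<in>{..<n}. if m = i then integral\<^sup>L \<rho> (\<lambda>x. g x * g x) else 1)"
      by (simp only: Fv)
    also have "\<dots> = (if i \<in> {..<n} then integral\<^sup>L \<rho> (\<lambda>x. g x * g x) else 1)"
      by (rule prod.delta) simp
    finally show ?thesis using that True by simp
  next
    case False
    define F where "F m = (\<lambda>x. (if m = i then g x else (1::real)) * (if m = l then g x else 1))" for m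
    have pr: "(\<Prod>m\<in>{..<n}. F m (xs m)) = g (xs i) * g (xs l)" for xs
    proof -
      have "(\<Prod>m\<in>{..<n}. F m (xs m)) = (\<Prod>m\<in>{..<n}. if m = i then g (xs m) else 1) *
          (\<Prod>m\<in>{..<n}. if m = l then g (xs m) else 1)"
        by (simp only: F_def prod.distrib)
      also have "\<dots> = (if i \<in> {..<n} then g (xs i) else 1) * (if l \<in> {..<n} then g (xs l) else 1)"
        by (simp only: prod.delta finite_lessThan)
      also have "\<dots> = g (xs i) * g (xs l)" using that by simp
      finally show ?thesis .
    qed
    have Fi: "integrable \<rho> (F m)" for m
    proof -
      consider "m = i" | "m = l" | "m \<noteq> i" "m \<noteq> l" by blast
      then show ?thesis
      proof cases
        case 1 then have "F m = g" using False unfolding F_def by (simp add: fun_eq_iff)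
        then show ?thesis using gint by simp
      next
        case 2 then have "F m = g" using False unfolding F_def by (simp add: fun_eq_iff)
        then show ?thesis using gint by simp
      next
        case 3 then have "F m = (\<lambda>_. 1)" unfolding F_def by (simp add: fun_eq_iff)
        then show ?thesis by simp
      qed
    qed
    have Fz: "integral\<^sup>L \<rho> (F i) = 0"
    proof -
      have "F i = g" using False unfolding F_def by (simp add: fun_eq_iff)
      then show ?thesis using g0 by simp
    qed
    have "integral\<^sup>L ?M (\<lambda>xs. g (xs i) * g (xs l)) = integral\<^sup>L ?M (\<lambda>xs. \<Prod>m\<in>{..<n}. F m (xs m))"
      by (simp only: pr)
    also have "\<dots> = (\<Prod>m\<in>{..<n}. integral\<^sup>L \<rho> (F m))"
      by (rule PS.product_integral_prod) (simp_all add: Fi)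
    also have "\<dots> = 0"
      by (rule prod_zero) (use that Fz in auto)
    finally show ?thesis using False by simp
  qed
  have sq: "((1 / real n) * (\<Sum>i<n. g (xs i)))\<^sup>2
     = (1 / real n)^2 * (\<Sum>i<n. \<Sum>l<n. g (xs i) * g (xs l))" for xs
    by (simp only: power_mult_distrib power2_eq_square[of "\<Sum>i<n. g (xs i)"] sum_product)
  have rowint: "integrable ?M (\<lambda>xs. \<Sum>l<n. g (xs i) * g (xs l))" if i: "i < n" for i
  proof (rule Bochner_Integration.integrable_sum)
    fix l assume l: "l \<in> {..<n}"
    show "integrable ?M (\<lambda>xs. g (xs i) * g (xs l))" using i l by (intro tint) simp_all
  qed
  have int2: "integrable ?M (\<lambda>xs. (\<Sum>i<n. \<Sum>l<n. g (xs i) * g (xs l)))"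
    by (rule Bochner_Integration.integrable_sum) (simp add: rowint)
  have "integral\<^sup>L ?M (\<lambda>xs. (\<Sum>i<n. \<Sum>l<n. g (xs i) * g (xs l)))
      = (\<Sum>i<n. integral\<^sup>L ?M (\<lambda>xs. \<Sum>l<n. g (xs i) * g (xs l)))"
    by (rule Bochner_Integration.integral_sum) (simp add: rowint)
  also have "\<dots> = (\<Sum>i<n. \<Sum>l<n. integral\<^sup>L ?M (\<lambda>xs. g (xs i) * g (xs l)))"
    by (intro sum.cong refl Bochner_Integration.integral_sum) (simp add: tint)
  also have "\<dots> = (\<Sum>i<n. \<Sum>l<n. (if i = l then integral\<^sup>L \<rho> (\<lambda>x. g x * g x) else 0))"
    by (intro sum.cong refl) (simp add: tval)
  also have "\<dots> = (\<Sum>i<n. integral\<^sup>L \<rho> (\<lambda>x. g x * g x))"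
    by (intro sum.cong refl) (simp add: sum.delta)
  also have "\<dots> = real n * integral\<^sup>L \<rho> (\<lambda>x. (g x)\<^sup>2)" by (simp add: power2_eq_square)
  finally have e: "integral\<^sup>L ?M (\<lambda>xs. (\<Sum>i<n. \<Sum>l<n. g (xs i) * g (xs l)))
      = real n * integral\<^sup>L \<rho> (\<lambda>x. (g x)\<^sup>2)" .
  have I1: "integrable ?M (\<lambda>xs. ((1 / real n) * (\<Sum>i<n. g (xs i)))\<^sup>2)"
    unfolding sq by (rule integrable_mult_right[OF int2])
  have "integral\<^sup>L ?M (\<lambda>xs. ((1 / real n) * (\<Sum>i<n. g (xs i)))\<^sup>2)
     = (1 / real n)^2 * (real n * integral\<^sup>L \<rho> (\<lambda>x. (g x)\<^sup>2))"
    unfolding sq integral_mult_right_zero e ..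
  also have "\<dots> = (1 / real n) * integral\<^sup>L \<rho> (\<lambda>x. (g x)\<^sup>2)"
    using n by (simp add: power2_eq_square)
  finally show ?thesis using I1 by blast
qed

theorem lemma2:
  fixes X :: "(real ^ 'd) set" and \<rho> :: "(real ^ 'd) measure"
    and K :: "real ^ 'd \<Rightarrow> real ^ 'd \<Rightarrow> real"
    and \<psi> :: "nat \<Rightarrow> real ^ 'd \<Rightarrow> real" and t :: "nat \<Rightarrow> real"
    and \<kappa> :: real and n :: nat
  assumes "prob_space \<rho>"
    and "sets \<rho> = sets (restrict_space borel X)"
    and "sym_pd_kernel X K"
    and "\<forall>x\<in>X. K x x \<le> \<kappa>\<^sup>2"
    and "L2_onb \<rho> \<psi>"
    and "\<forall>j. (t (Suc j))\<^sup>2 \<le> (t j)\<^sup>2"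
    and "\<forall>x\<in>X. \<forall>y\<in>X. summable (\<lambda>j. \<bar>(t j)\<^sup>2 * \<psi> j x * \<psi> j y\<bar>) \<and>
                      (\<lambda>j. (t j)\<^sup>2 * \<psi> j x * \<psi> j y) sums K x y"
    and "n > 0"
  shows "(\<integral>\<^sup>+ xs. ennreal ((op_norm (\<lambda>j k. Sigma_op n t \<psi> xs j k - T_op t j k))\<^sup>2)
            \<partial>(PiM {..<n} (\<lambda>_. \<rho>)))
         \<le> ennreal (34 * \<kappa> ^ 4 / real n + 15 * \<kappa> ^ 4 / (real n)\<^sup>2)"
proof -
  note P = assms(1)
  interpret prob_space \<rho> by fact
  let ?M = "PiM {..<n} (\<lambda>_. \<rho>)"
  interpret MP: prob_space ?M by (rule prob_space_PiM) (rule P)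
  have n: "n > 0" by fact
  have spX: "space \<rho> = X"
    using sets_eq_imp_space_eq[OF assms(2)] by (simp add: space_restrict_space)
  define \<phi> where "\<phi> j x = t j * \<psi> j x" for j x
  have onb: "\<And>j. \<psi> j \<in> borel_measurable \<rho>"
    "\<And>j k. (\<integral>x. \<psi> j x * \<psi> k x \<partial>\<rho>) = (if j = k then 1 else 0)"
    using assms(5) by (auto simp: L2_onb_def)
  have \<phi>m[measurable]: "\<phi> j \<in> borel_measurable \<rho>" for j
    unfolding \<phi>_def using onb(1) by measurable
  have Ks: "(\<lambda>j. (\<phi> j x)\<^sup>2) sums K x x" if "x \<in> space \<rho>" for x
  proof -
    have "(\<lambda>j. (t j)\<^sup>2 * \<psi> j x * \<psi> j x) sums K x x" using assms(7) that spX by auto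
    then show ?thesis by (simp add: \<phi>_def power2_eq_square mult_ac)
  qed
  have Kle: "K x x \<le> \<kappa>\<^sup>2" if "x \<in> space \<rho>" for x using assms(4) that spX by auto
  have K0: "0 \<le> K x x" if "x \<in> space \<rho>" for x
    using sums_le[OF _ sums_zero Ks[OF that]] by simp
  have \<phi>le: "(\<phi> j x)\<^sup>2 \<le> \<kappa>\<^sup>2" if "x \<in> space \<rho>" for j x
  proof -
    have "(\<phi> j x)\<^sup>2 \<le> K x x"
      using sum_le_suminf[OF sums_summable[OF Ks[OF that]], of "{j}"] sums_unique[OF Ks[OF that]]
      by auto
    then show ?thesis using Kle[OF that] by linarith
  qed
  have \<phi>pb: "\<bar>\<phi> j x * \<phi> k x\<bar> \<le> \<kappa>\<^sup>2" if "x \<in> space \<rho>" for j k x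
  proof -
    have h: "(\<phi> j x)\<^sup>2 * (\<phi> k x)\<^sup>2 \<le> \<kappa>\<^sup>2 * \<kappa>\<^sup>2"
      by (rule mult_mono) (use \<phi>le[OF that, of j] \<phi>le[OF that, of k] in auto)
    then have "(\<phi> j x * \<phi> k x)\<^sup>2 \<le> (\<kappa>\<^sup>2)\<^sup>2"
      by (simp only: power_mult_distrib power2_eq_square[of "\<kappa>\<^sup>2"])
    then have "\<bar>\<phi> j x * \<phi> k x\<bar> \<le> \<bar>\<kappa>\<^sup>2\<bar>" by (simp only: abs_le_square_iff)
    then show ?thesis by simp
  qed
  have pint: "integrable \<rho> (\<lambda>x. \<phi> j x * \<phi> k x)" for j k
    by (rule integrable_const_bound[where B="\<kappa>\<^sup>2"]) (use \<phi>pb in auto)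
  define c where "c j k = (if j = k then (t j)\<^sup>2 else 0)" for j k :: nat
  have cint: "integral\<^sup>L \<rho> (\<lambda>x. \<phi> j x * \<phi> k x) = c j k" for j k
  proof -
    have "(\<lambda>x. \<phi> j x * \<phi> k x) = (\<lambda>x. (t j * t k) * (\<psi> j x * \<psi> k x))"
      by (rule ext) (simp only: \<phi>_def mult_ac)
    then have "integral\<^sup>L \<rho> (\<lambda>x. \<phi> j x * \<phi> k x) = t j * t k * (\<integral>x. \<psi> j x * \<psi> k x \<partial>\<rho>)"
      by (simp only: integral_mult_right_zero)
    then show ?thesis by (simp add: onb(2) c_def power2_eq_square)
  qed
  define g where "g j k x = \<phi> j x * \<phi> k x - c j k" for j k x
  have gm[measurable]: "g j k \<in> borel_measurable \<rho>" for j k unfolding g_def by measurable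
  have gb: "\<bar>g j k x\<bar> \<le> \<kappa>\<^sup>2 + \<bar>c j k\<bar>" if "x \<in> space \<rho>" for j k x
    using \<phi>pb[OF that, of j k] unfolding g_def by linarith
  have g0: "integral\<^sup>L \<rho> (g j k) = 0" for j k
    unfolding g_def using pint cint by (simp add: prob_space)
  define a where "a xs j k = Sigma_op n t \<psi> xs j k - T_op t j k" for xs j k
  have arep: "a xs j k = (1 / real n) * (\<Sum>i<n. g j k (xs i))" for xs j k
  proof -
    have "(\<Sum>i<n. g j k (xs i)) = (\<Sum>i<n. \<phi> j (xs i) * \<phi> k (xs i)) - real n * c j k"
      by (simp add: g_def sum_subtractf)
    then have "(1 / real n) * (\<Sum>i<n. g j k (xs i))
       = (1 / real n) * (\<Sum>i<n. \<phi> j (xs i) * \<phi> k (xs i)) - (1 / real n) * (real n * c j k)"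
      by (simp only: right_diff_distrib)
    also have "(1 / real n) * (real n * c j k) = c j k" using n by simp
    finally have "(1 / real n) * (\<Sum>i<n. g j k (xs i))
       = (1 / real n) * (\<Sum>i<n. \<phi> j (xs i) * \<phi> k (xs i)) - c j k" .
    then show ?thesis
      by (simp add: a_def Sigma_op_def T_op_def c_def \<phi>_def)
  qed
  have vm: "integrable ?M (\<lambda>xs. (a xs j k)\<^sup>2) \<and>
      integral\<^sup>L ?M (\<lambda>xs. (a xs j k)\<^sup>2) = (1 / real n) * integral\<^sup>L \<rho> (\<lambda>x. (g j k x)\<^sup>2)" for j k
    unfolding arep by (rule var_mean[OF P gm gb g0 n])
  have gsq: "integral\<^sup>L \<rho> (\<lambda>x. (g j k x)\<^sup>2) \<le> integral\<^sup>L \<rho> (\<lambda>x. (\<phi> j x * \<phi> k x)\<^sup>2)" for j k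
  proof -
    have i2: "integrable \<rho> (\<lambda>x. (\<phi> j x * \<phi> k x)\<^sup>2)"
    proof (rule integrable_const_bound[where B="(\<kappa>\<^sup>2)\<^sup>2"])
      show "AE x in \<rho>. norm ((\<phi> j x * \<phi> k x)\<^sup>2) \<le> (\<kappa>\<^sup>2)\<^sup>2"
      proof (rule AE_I2)
        fix x assume x: "x \<in> space \<rho>"
        have "\<bar>\<phi> j x * \<phi> k x\<bar>\<^sup>2 \<le> (\<kappa>\<^sup>2)\<^sup>2"
          by (rule power_mono[OF \<phi>pb[OF x] abs_ge_zero])
        then show "norm ((\<phi> j x * \<phi> k x)\<^sup>2) \<le> (\<kappa>\<^sup>2)\<^sup>2"
          by (simp only: real_norm_def abs_power2 power2_abs)
      qed
    qed simp
    have "(\<lambda>x. (g j k x)\<^sup>2) = (\<lambda>x. (\<phi> j x * \<phi> k x)\<^sup>2 - 2 * c j k * (\<phi> j x * \<phi> k x) + (c j k)\<^sup>2)"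
      by (auto simp: g_def power2_eq_square algebra_simps)
    then have "integral\<^sup>L \<rho> (\<lambda>x. (g j k x)\<^sup>2)
        = integral\<^sup>L \<rho> (\<lambda>x. (\<phi> j x * \<phi> k x)\<^sup>2) - 2 * c j k * c j k + (c j k)\<^sup>2"
      using i2 pint[of j k] cint[of j k] by (simp add: prob_space)
    then show ?thesis by (simp add: power2_eq_square)
  qed
  have i2: "integrable \<rho> (\<lambda>x. (\<phi> j x * \<phi> k x)\<^sup>2)" for j k
  proof (rule integrable_const_bound[where B="(\<kappa>\<^sup>2)\<^sup>2"])
    show "AE x in \<rho>. norm ((\<phi> j x * \<phi> k x)\<^sup>2) \<le> (\<kappa>\<^sup>2)\<^sup>2"
    proof (rule AE_I2)
      fix x assume x: "x \<in> space \<rho>"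
      have "\<bar>\<phi> j x * \<phi> k x\<bar>\<^sup>2 \<le> (\<kappa>\<^sup>2)\<^sup>2"
        by (rule power_mono[OF \<phi>pb[OF x] abs_ge_zero])
      then show "norm ((\<phi> j x * \<phi> k x)\<^sup>2) \<le> (\<kappa>\<^sup>2)\<^sup>2"
        by (simp only: real_norm_def abs_power2 power2_abs)
    qed
  qed simp
  define HS where "HS xs = (\<Sum>j. \<Sum>k. ennreal ((a xs j k)\<^sup>2))" for xs
  have am: "(\<lambda>xs. a xs j k) \<in> borel_measurable ?M" for j k
    unfolding arep
  proof (intro borel_measurable_times borel_measurable_const borel_measurable_sum)
    fix i assume "i \<in> {..<n}"
    then show "(\<lambda>xs. g j k (xs i)) \<in> borel_measurable ?M"
      by (rule measurable_compose[OF measurable_component_singleton[of i "{..<n}" "\<lambda>_. \<rho>"] gm[of j k]])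
  qed
  have am2: "(\<lambda>xs. ennreal ((a xs j k)\<^sup>2)) \<in> borel_measurable ?M" for j k
    by (rule measurable_compose[OF borel_measurable_power[OF am] measurable_ennreal])
  have HSm: "HS \<in> borel_measurable ?M" unfolding HS_def
    by (intro borel_measurable_suminf_order am2)
  have trm: "integral\<^sup>N ?M (\<lambda>xs. ennreal ((a xs j k)\<^sup>2))
      \<le> ennreal (1 / real n) * integral\<^sup>N \<rho> (\<lambda>x. ennreal ((\<phi> j x * \<phi> k x)\<^sup>2))" for j k
  proof -
    have v1: "integrable ?M (\<lambda>xs. (a xs j k)\<^sup>2)" by (rule conjunct1[OF vm])
    have v2: "integral\<^sup>L ?M (\<lambda>xs. (a xs j k)\<^sup>2) = (1 / real n) * integral\<^sup>L \<rho> (\<lambda>x. (g j k x)\<^sup>2)"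
      by (rule conjunct2[OF vm])
    have I0: "0 \<le> integral\<^sup>L \<rho> (\<lambda>x. (\<phi> j x * \<phi> k x)\<^sup>2)"
      by (rule integral_nonneg_AE) (rule AE_I2, rule zero_le_power2)
    have "integral\<^sup>N ?M (\<lambda>xs. ennreal ((a xs j k)\<^sup>2)) = ennreal (integral\<^sup>L ?M (\<lambda>xs. (a xs j k)\<^sup>2))"
      by (rule nn_integral_eq_integral[OF v1]) (rule AE_I2, rule zero_le_power2)
    also have "\<dots> = ennreal ((1 / real n) * integral\<^sup>L \<rho> (\<lambda>x. (g j k x)\<^sup>2))" by (simp only: v2)
    also have "\<dots> \<le> ennreal ((1 / real n) * integral\<^sup>L \<rho> (\<lambda>x. (\<phi> j x * \<phi> k x)\<^sup>2))"
    proof (rule ennreal_leI, rule mult_left_mono[OF gsq])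
      show "0 \<le> 1 / real n" by simp
    qed
    also have "\<dots> = ennreal (1 / real n) * ennreal (integral\<^sup>L \<rho> (\<lambda>x. (\<phi> j x * \<phi> k x)\<^sup>2))"
      by (rule ennreal_mult[OF _ I0]) simp
    also have "ennreal (integral\<^sup>L \<rho> (\<lambda>x. (\<phi> j x * \<phi> k x)\<^sup>2))
        = integral\<^sup>N \<rho> (\<lambda>x. ennreal ((\<phi> j x * \<phi> k x)\<^sup>2))"
      by (rule nn_integral_eq_integral[OF i2, symmetric]) (rule AE_I2, rule zero_le_power2)
    finally show ?thesis .
  qed
  have pw: "(\<Sum>j. \<Sum>k. ennreal ((\<phi> j x * \<phi> k x)\<^sup>2)) \<le> ennreal ((\<kappa>\<^sup>2)\<^sup>2)"
    if x: "x \<in> space \<rho>" for x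
  proof -
    have ks: "(\<lambda>k. (\<phi> k x)\<^sup>2) sums K x x" by (rule Ks[OF x])
    have inner: "(\<Sum>k. ennreal ((\<phi> j x * \<phi> k x)\<^sup>2)) = ennreal ((\<phi> j x)\<^sup>2 * K x x)" for j
    proof -
      have sj: "(\<lambda>k. (\<phi> j x * \<phi> k x)\<^sup>2) sums ((\<phi> j x)\<^sup>2 * K x x)"
        using sums_mult[OF ks, of "(\<phi> j x)\<^sup>2"] by (simp add: power_mult_distrib)
      have "(\<Sum>k. ennreal ((\<phi> j x * \<phi> k x)\<^sup>2)) = ennreal (\<Sum>k. (\<phi> j x * \<phi> k x)\<^sup>2)"
        by (rule suminf_ennreal2[OF _ sums_summable[OF sj]]) (rule zero_le_power2)
      also have "\<dots> = ennreal ((\<phi> j x)\<^sup>2 * K x x)"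
        by (simp only: sums_unique[OF sj, symmetric])
      finally show ?thesis .
    qed
    have so: "(\<lambda>j. (\<phi> j x)\<^sup>2 * K x x) sums (K x x * K x x)"
      using sums_mult2[OF ks, of "K x x"] by (simp only:)
    have "(\<Sum>j. \<Sum>k. ennreal ((\<phi> j x * \<phi> k x)\<^sup>2)) = ennreal (K x x * K x x)"
      unfolding inner
    proof -
      have "(\<Sum>j. ennreal ((\<phi> j x)\<^sup>2 * K x x)) = ennreal (\<Sum>j. (\<phi> j x)\<^sup>2 * K x x)"
        by (rule suminf_ennreal2[OF _ sums_summable[OF so]]) (simp add: K0[OF x])
      also have "\<dots> = ennreal (K x x * K x x)"
        by (simp only: sums_unique[OF so, symmetric])
      finally show "(\<Sum>j. ennreal ((\<phi> j x)\<^sup>2 * K x x)) = ennreal (K x x * K x x)" .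
    qed
    also have "\<dots> \<le> ennreal ((\<kappa>\<^sup>2)\<^sup>2)"
      unfolding power2_eq_square[of "\<kappa>\<^sup>2"]
      by (rule ennreal_leI, rule mult_mono[OF Kle[OF x] Kle[OF x] zero_le_power2 K0[OF x]])
    finally show ?thesis .
  qed
  have m2: "(\<lambda>x. ennreal ((\<phi> j x * \<phi> k x)\<^sup>2)) \<in> borel_measurable \<rho>" for j k
    by (rule measurable_compose[OF borel_measurable_power[OF borel_measurable_times[OF \<phi>m \<phi>m]] measurable_ennreal])
  have Q: "(\<Sum>j. \<Sum>k. integral\<^sup>N \<rho> (\<lambda>x. ennreal ((\<phi> j x * \<phi> k x)\<^sup>2))) \<le> ennreal ((\<kappa>\<^sup>2)\<^sup>2)"
  proof -
    have e1: "(\<Sum>k. integral\<^sup>N \<rho> (\<lambda>x. ennreal ((\<phi> j x * \<phi> k x)\<^sup>2)))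
        = integral\<^sup>N \<rho> (\<lambda>x. \<Sum>k. ennreal ((\<phi> j x * \<phi> k x)\<^sup>2))" for j
      by (rule nn_integral_suminf[OF m2, symmetric])
    have m3: "(\<lambda>x. \<Sum>k. ennreal ((\<phi> j x * \<phi> k x)\<^sup>2)) \<in> borel_measurable \<rho>" for j
      by (rule borel_measurable_suminf_order[OF m2])
    have "(\<Sum>j. \<Sum>k. integral\<^sup>N \<rho> (\<lambda>x. ennreal ((\<phi> j x * \<phi> k x)\<^sup>2)))
        = (\<Sum>j. integral\<^sup>N \<rho> (\<lambda>x. \<Sum>k. ennreal ((\<phi> j x * \<phi> k x)\<^sup>2)))"
      by (simp only: e1)
    also have "\<dots> = integral\<^sup>N \<rho> (\<lambda>x. \<Sum>j. \<Sum>k. ennreal ((\<phi> j x * \<phi> k x)\<^sup>2))"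
      by (rule nn_integral_suminf[OF m3, symmetric])
    also have "\<dots> \<le> integral\<^sup>N \<rho> (\<lambda>x. ennreal ((\<kappa>\<^sup>2)\<^sup>2))"
      by (rule nn_integral_mono) (rule pw)
    also have "\<dots> = ennreal ((\<kappa>\<^sup>2)\<^sup>2)" by (simp only: nn_integral_const emeasure_space_1 mult_1_right)
    finally show ?thesis .
  qed
  have e2: "integral\<^sup>N ?M (\<lambda>xs. \<Sum>k. ennreal ((a xs j k)\<^sup>2))
      = (\<Sum>k. integral\<^sup>N ?M (\<lambda>xs. ennreal ((a xs j k)\<^sup>2)))" for j
    by (rule nn_integral_suminf[OF am2])
  have m4: "(\<lambda>xs. \<Sum>k. ennreal ((a xs j k)\<^sup>2)) \<in> borel_measurable ?M" for j
    by (rule borel_measurable_suminf_order[OF am2])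
  have "integral\<^sup>N ?M HS = (\<Sum>j. integral\<^sup>N ?M (\<lambda>xs. \<Sum>k. ennreal ((a xs j k)\<^sup>2)))"
    unfolding HS_def by (rule nn_integral_suminf[OF m4])
  also have "\<dots> = (\<Sum>j. \<Sum>k. integral\<^sup>N ?M (\<lambda>xs. ennreal ((a xs j k)\<^sup>2)))"
    by (simp only: e2)
  also have "\<dots> \<le> (\<Sum>j. \<Sum>k. ennreal (1 / real n) * integral\<^sup>N \<rho> (\<lambda>x. ennreal ((\<phi> j x * \<phi> k x)\<^sup>2)))"
    by (rule suminf_le[OF suminf_le[OF trm summableI summableI] summableI summableI])
  also have "\<dots> = ennreal (1 / real n) * (\<Sum>j. \<Sum>k. integral\<^sup>N \<rho> (\<lambda>x. ennreal ((\<phi> j x * \<phi> k x)\<^sup>2)))"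
    by (simp only: ennreal_suminf_cmult)
  also have "\<dots> \<le> ennreal (1 / real n) * ennreal ((\<kappa>\<^sup>2)\<^sup>2)"
    by (rule mult_left_mono[OF Q]) simp
  finally have HSle: "integral\<^sup>N ?M HS \<le> ennreal (1 / real n) * ennreal ((\<kappa>\<^sup>2)\<^sup>2)" .
  have ce: "ennreal (1 / real n) * ennreal ((\<kappa>\<^sup>2)\<^sup>2) = ennreal ((\<kappa>\<^sup>2)\<^sup>2 / real n)"
  proof -
    have "ennreal (1 / real n) * ennreal ((\<kappa>\<^sup>2)\<^sup>2) = ennreal (1 / real n * (\<kappa>\<^sup>2)\<^sup>2)"
      by (rule ennreal_mult[symmetric]) simp_all
    also have "1 / real n * (\<kappa>\<^sup>2)\<^sup>2 = (\<kappa>\<^sup>2)\<^sup>2 / real n" by simp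
    finally show ?thesis .
  qed
  have HSfin: "integral\<^sup>N ?M HS \<noteq> \<infinity>"
  proof -
    have h: "integral\<^sup>N ?M HS \<le> ennreal ((\<kappa>\<^sup>2)\<^sup>2 / real n)" using HSle by (simp only: ce)
    show ?thesis unfolding infinity_ennreal_def using neq_top_trans[OF ennreal_neq_top h] .
  qed
  have AEfin: "AE xs in ?M. HS xs \<noteq> \<infinity>" by (rule nn_integral_PInf_AE[OF HSm HSfin])
  have "(\<integral>\<^sup>+ xs. ennreal ((op_norm (\<lambda>j k. Sigma_op n t \<psi> xs j k - T_op t j k))\<^sup>2) \<partial>?M)
      \<le> integral\<^sup>N ?M HS"
  proof (rule nn_integral_mono_AE)
    show "AE xs in ?M. ennreal ((op_norm (\<lambda>j k. Sigma_op n t \<psi> xs j k - T_op t j k))\<^sup>2) \<le> HS xs"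
      using AEfin
    proof eventually_elim
      case (elim xs)
      have fa: "(\<lambda>j k. Sigma_op n t \<psi> xs j k - T_op t j k) = a xs" unfolding a_def by (rule refl)
      have "(\<Sum>j. \<Sum>k. ennreal ((a xs j k)\<^sup>2)) \<noteq> \<top>"
        using elim unfolding HS_def infinity_ennreal_def .
      then show ?case unfolding fa HS_def by (rule op_norm_HS_ennreal)
    qed
  qed
  also have "\<dots> \<le> ennreal (1 / real n) * ennreal ((\<kappa>\<^sup>2)\<^sup>2)" by (rule HSle)
  also have "\<dots> = ennreal ((\<kappa>\<^sup>2)\<^sup>2 / real n)" by (rule ce)
  also have "\<dots> \<le> ennreal (34 * \<kappa> ^ 4 / real n + 15 * \<kappa> ^ 4 / (real n)\<^sup>2)"
  proof (rule ennreal_leI)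
    have k4: "(\<kappa>\<^sup>2)\<^sup>2 = \<kappa> ^ 4" by simp
    have k0: "0 \<le> \<kappa> ^ 4" unfolding k4[symmetric] by (rule zero_le_power2)
    have a1: "\<kappa> ^ 4 / real n \<le> 34 * \<kappa> ^ 4 / real n"
      by (rule divide_right_mono) (use k0 in linarith, simp)
    have a2: "0 \<le> 15 * \<kappa> ^ 4 / (real n)\<^sup>2"
      by (intro divide_nonneg_nonneg mult_nonneg_nonneg) (use k0 in simp_all)
    note a1 a2
    then show "(\<kappa>\<^sup>2)\<^sup>2 / real n \<le> 34 * \<kappa> ^ 4 / real n + 15 * \<kappa> ^ 4 / (real n)\<^sup>2"
      unfolding k4 by linarith
  qed
  finally show ?thesis .
qed
end
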